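(* Let $(X,f)$ be the CCS dialgebra and $(X,g)$ the CCS coalgebra (see context), and let $\mathsf{F}(X)=X+(X\times X)$, $\mathsf{B}=\mathcal{P}$, $\mathsf{T}(X)=\mathcal{P}(L\times X)$, $\mathsf{Id}$ the identity functor. Let $E$ be the subcategory of epimorphisms of $\mathit{Dialg}(\mathsf{F},\mathsf{B})$ and $E'$ that of $\mathit{Dialg}(\mathsf{Id},\mathsf{T})$. Let $\mathcal{R}_{(X,f)}=(X,f)/E$ (the whole coslice), and let $\mathcal{R}_{(X,g)}$ be the full subcategory of $(X,g)/E'$ whose objects are those epimorphisms $h$ out of $(X,g)$ such that for all processes $x,x',y,y'$, $h(x)=h(x')$ and $h(y)=h(y')$ imply $h(x\parallel y)=h(x'\parallel y')$. Then: (1) $\mathcal{R}_{(X,g)}$ satisfies conditions (1) and (2) required of $\mathcal{R}$ in the context; (2) $\mathit{id}_{\mathsf{F}X}$ is an invariant for $(X,g)$ and $\mathcal{R}_{(X,g)}$ from $\overline{\mathsf{F}}$ to $\mathsf{F}\circ\overline{\mathsf{Id}}=\overline{\mathsf{F}}$; (3) $\delta$ is an invariant for $(X,g)$ and $\mathcal{R}_{(X,g)}$ from $\mathsf{F}\circ\overline{\mathsf{T}}$ to $\overline{\mathsf{B}}$; (4) $\lambda$ is an invariant for $(X,f)$ and $\mathcal{R}_{(X,f)}$ from $\overline{\mathsf{Id}}$ to $\mathsf{T}\circ\overline{\mathsf{F}}$; (5) $\mu$ is an invariant for $(X,f)$ and $\mathcal{R}_{(X,f)}$ from $\mathsf{T}\circ\overline{\mathsf{B}}$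 to $\overline{\mathsf{T}}$.
   Context: General notions. For functors $\mathsf{F},\mathsf{B}:\mathbf{Set}\to\mathbf{Set}$, an $(\mathsf{F},\mathsf{B})$-dialgebra is a pair $(X,f)$ with $f:\mathsf{F}X\to\mathsf{B}X$; a homomorphism $h:(X,f)\to(Y,g)$ is a function with $g\circ\mathsf{F}h=\mathsf{B}h\circ f$. A $\mathsf{T}$-coalgebra is an $(\mathsf{Id},\mathsf{T})$-dialgebra. For a dialgebra $(X,f)$ and a subcategory $E$ of epimorphisms of its category, $(X,f)/E$ is the coslice: objects are epimorphisms $h:(X,f)\to(Y,g)$, arrows $h\to h'$ are epimorphisms $k$ with $k\circ h=h'$. A category $\mathcal{R}_{(X,f)}$ is required to be a full subcategory of $(X,f)/E$ with (1) for every object $h$ of $(X,f)/E$ an object $h'$ of $\mathcal{R}_{(X,f)}$ and an arrow $h\to h'$, and (2) $\mathit{id}_{(X,f)}$ an object. For an object $h$, $\hat h:\mathit{id}\to h$ is the arrow given by $h$. For $\mathsf{H}:\mathbf{Set}\to\mathbf{Set}$, the lifting $\overline{\mathsf{H}}:\mathcal{R}_{(X,f)}\to\mathbf{Set}$ is $\overline{\mathsf{H}}(h:(X,f)\to(Y,g))=\mathsf{H}Y$, $\overline{\mathsf{H}}(k)=\mathsf{H}k$; a composite like $\mathsf{T}\circ\overline{\mathsf{F}}$ sends $h$ to $\mathsf{T}\mathsf{F}Y$. For functors $\Phi,\Psi:\mathcal{R}_{(X,f)}\to\mathbf{Set}$, a function $k:\Phi(\mathit{id})\to\Psi(\mathit{id})$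 is an invariant from $\Phi$ to $\Psi$ iff for all $x_1,x_2\in\Phi(\mathit{id})$ and every object $h$, $\Phi\hat h(x_1)=\Phi\hat h(x_2)$ implies $\Psi\hat h(k(x_1))=\Psi\hat h(k(x_2))$. Functors: $\mathsf{F}(X)=X+(X\times X)$, $\mathsf{F}h(x)=h(x)$, $\mathsf{F}h(x,y)=(h(x),h(y))$ (elements written without coproduct tags); $\mathsf{B}(X)=\mathcal{P}(X)$, $\mathsf{B}h(S)=h[S]$; $\mathsf{T}(X)=\mathcal{P}(L\times X)$, $\mathsf{T}h(S)=\{(l,h(x))\mid(l,x)\in S\}$. CCS. Let $\mathcal{C}$ be a countable set of channels. Prefixes: $\alpha::=\tau\mid a\mid\bar a$ ($a\in\mathcal{C}$); $L$ is the set of prefixes. Processes: $P::=\sum_{i\in I}\alpha_i.P_i\mid P_1\parallel P_2\mid(\nu a)P$ with $I$ finite, sums taken up to reordering of summands; $\mathbf{0}$ is the empty sum, $\alpha.P$ a one-summand sum, and $\alpha.P+Q$ denotes a sum having $\alpha.P$ as a summand. $X$ is the set of processes. Free names: $\mathit{fn}(\tau)=\emptyset$, $\mathit{fn}(a)=\mathit{fn}(\bar a)=\{a\}$, $\mathit{fn}(\sum\alpha_i.P_i)=\bigcup_i(\mathit{fn}(\alpha_i)\cup\mathit{fn}(P_i))$, $\mathit{fn}(P\parallel Q)=\mathit{fn}(P)\cup\mathit{fn}(Q)$, $\mathit{fn}((\nu a)P)=\mathit{fn}(P)\setminus\{a\}$. Structural congruence $\equiv$ is the least congruence containing $\alpha$-conversion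 of $a$ in $(\nu a)P$, the commutative monoid laws for $\parallel$ with unit $\mathbf{0}$, and $(\nu a)(P\parallel Q)\equiv((\nu a)P)\parallel Q$ if $a\notin\mathit{fn}(Q)$, $(\nu a)\mathbf{0}\equiv\mathbf{0}$, $(\nu a)(\nu b)P\equiv(\nu b)(\nu a)P$. The CCS LTS is the least relation $P\xrightarrow{\alpha}P'$ closed under: (pre) $\alpha.P+Q\xrightarrow{\alpha}P$; (res) if $a\notin\mathit{fn}(\alpha)$ and $P\xrightarrow{\alpha}P'$ then $(\nu a)P\xrightarrow{\alpha}(\nu a)P'$; (par) if $P\xrightarrow{\alpha}P'$ then $P\parallel Q\xrightarrow{\alpha}P'\parallel Q$; (syn) if $P\xrightarrow{\bar c}P'$ and $Q\xrightarrow{c}Q'$ then $P\parallel Q\xrightarrow{\tau}P'\parallel Q'$; (str) if $P\equiv Q$, $P'\equiv Q'$ and $P\xrightarrow{\alpha}P'$ then $Q\xrightarrow{\alpha}Q'$. The CCS coalgebra is $(X,g)$ with $g(x)=\{(\alpha,y)\mid x\xrightarrow{\alpha}y\}$. The CCS dialgebra is the $(\mathsf{F},\mathsf{B})$-dialgebra $(X,f)$ where $f$ is the least function (writing $P\to R$ for $R\in f(P)$ and $(P,Q)\to R$ for $R\in f(P,Q)$) closed under: (tau) $\tau.P+Q\to P$; (res) $P\to P'$ implies $(\nu a)P\to(\nu a)P'$; (par$_1$) $P\to P'$ implies $P\parallel Q\to P'\parallel Q$; (int) $(P,Q)\to R$ implies $P\parallel Q\to R$; (hid) $(P,Q)\to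 R$ and $a\notin\mathit{fn}(Q)$ imply $((\nu a)P,Q)\to(\nu a)R$; (par$_2$) $(P,Q)\to R$ implies $(P\parallel S,Q)\to S\parallel R$; (syn) $(\bar a.P+S,a.Q+T)\to P\parallel Q$; (sym) $(P,Q)\to R$ implies $(Q,P)\to R$; (str$_1$) $P\to R$, $P\equiv Q$, $R\equiv S$ imply $Q\to S$; (str$_2$) $(P,Q)\to R$, $P\equiv S$, $Q\equiv T$, $R\equiv U$ imply $(S,T)\to U$. The maps: $\delta:\mathsf{F}\mathsf{T}X\to\mathsf{B}X$ with $\delta(p)=\{x\mid(\tau,x)\in p\}$ for $p\in\mathsf{T}X$ and $\delta(p_1,p_2)=\{x\parallel y\mid\exists a\in\mathcal{C}.\,((a,x)\in p_1\wedge(\bar a,y)\in p_2)\vee((\bar a,x)\in p_1\wedge(a,y)\in p_2)\}$; $\lambda:X\to\mathsf{T}\mathsf{F}X$ with $\lambda(x)=\{(\tau,x)\}\cup\{(a,(x,\bar a.\mathbf{0}))\mid a\in\mathcal{C}\}\cup\{(\bar a,(x,a.\mathbf{0}))\mid a\in\mathcal{C}\}$; $\mu:\mathsf{T}\mathsf{B}X\to\mathsf{T}X$ with $\mu(q)=\{(l,x)\mid\exists q'.\,(l,q')\in q\wedge x\in q'\}$. *)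

theory Defs
  imports Main "HOL-Library.Multiset" "HOL-Library.Countable"
begin

datatype 'c pre = Tau | In 'c | Out 'c

text \<open>Processes; a guarded sum is a finite multiset of summands (sums up to reordering).\<close>
datatype 'c proc = Sum "('c pre \<times> 'c proc) multiset" | Par "'c proc" "'c proc" | Res 'c "'c proc"

definition nil :: "'c proc" where "nil = Sum {#}"
definition pfx :: "'c pre \<Rightarrow> 'c proc \<Rightarrow> 'c proc" where "pfx a P = Sum {#(a, P)#}"

fun fn_pre :: "'c pre \<Rightarrow> 'c set" where
  "fn_pre Tau = {}" | "fn_pre (In a) = {a}" | "fn_pre (Out a) = {a}"

primrec fn :: "'c proc \<Rightarrow> 'c set" where
  "fn (Sum M) = (\<Union>p \<in> set_mset (image_mset (map_prod id fn) M). fn_pre (fst p) \<union> snd p)"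
| "fn (Par P Q) = fn P \<union> fn Q"
| "fn (Res a P) = fn P - {a}"

text \<open>Name swapping, used to express alpha-conversion of restricted names.\<close>
definition swap_name :: "'c \<Rightarrow> 'c \<Rightarrow> 'c \<Rightarrow> 'c" where
  "swap_name a b c = (if c = a then b else if c = b then a else c)"

fun swap_pre :: "'c \<Rightarrow> 'c \<Rightarrow> 'c pre \<Rightarrow> 'c pre" where
  "swap_pre a b Tau = Tau"
| "swap_pre a b (In c) = In (swap_name a b c)"
| "swap_pre a b (Out c) = Out (swap_name a b c)"

primrec pswap :: "'c \<Rightarrow> 'c \<Rightarrow> 'c proc \<Rightarrow> 'c proc" where
  "pswap a b (Sum M) = Sum (image_mset (map_prod (swap_pre a b) (pswap a b)) M)"
| "pswap a b (Par P Q) = Par (pswap a b P) (pswap a b Q)"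
| "pswap a b (Res c P) = Res (swap_name a b c) (pswap a b P)"

inductive scong :: "'c proc \<Rightarrow> 'c proc \<Rightarrow> bool" (infix "\<equiv>\<^sub>s" 50) where
  refl: "P \<equiv>\<^sub>s P"
| sym: "P \<equiv>\<^sub>s Q \<Longrightarrow> Q \<equiv>\<^sub>s P"
| trans: "P \<equiv>\<^sub>s Q \<Longrightarrow> Q \<equiv>\<^sub>s R \<Longrightarrow> P \<equiv>\<^sub>s R"
| sum_cong: "P \<equiv>\<^sub>s P' \<Longrightarrow> Sum (add_mset (\<alpha>, P) M) \<equiv>\<^sub>s Sum (add_mset (\<alpha>, P') M)"
| par_cong: "P \<equiv>\<^sub>s P' \<Longrightarrow> Q \<equiv>\<^sub>s Q' \<Longrightarrow> Par P Q \<equiv>\<^sub>s Par P' Q'"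
| res_cong: "P \<equiv>\<^sub>s P' \<Longrightarrow> Res a P \<equiv>\<^sub>s Res a P'"
| alpha: "b \<notin> fn (Res a P) \<Longrightarrow> Res a P \<equiv>\<^sub>s Res b (pswap a b P)"
| par_unit: "Par P nil \<equiv>\<^sub>s P"
| par_comm: "Par P Q \<equiv>\<^sub>s Par Q P"
| par_assoc: "Par (Par P Q) R \<equiv>\<^sub>s Par P (Par Q R)"
| scope: "a \<notin> fn Q \<Longrightarrow> Res a (Par P Q) \<equiv>\<^sub>s Par (Res a P) Q"
| res_nil: "Res a nil \<equiv>\<^sub>s nil"
| res_comm: "Res a (Res b P) \<equiv>\<^sub>s Res b (Res a P)"

inductive step :: "'c proc \<Rightarrow> 'c pre \<Rightarrow> 'c proc \<Rightarrow> bool" where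
  pre: "step (Sum (add_mset (\<alpha>, P) M)) \<alpha> P"
| res: "a \<notin> fn_pre \<alpha> \<Longrightarrow> step P \<alpha> P' \<Longrightarrow> step (Res a P) \<alpha> (Res a P')"
| par: "step P \<alpha> P' \<Longrightarrow> step (Par P Q) \<alpha> (Par P' Q)"
| syn: "step P (Out c) P' \<Longrightarrow> step Q (In c) Q' \<Longrightarrow> step (Par P Q) Tau (Par P' Q')"
| str: "P \<equiv>\<^sub>s Q \<Longrightarrow> P' \<equiv>\<^sub>s Q' \<Longrightarrow> step P \<alpha> P' \<Longrightarrow> step Q \<alpha> Q'"

definition ccs_g :: "('c::countable) proc \<Rightarrow> ('c pre \<times> 'c proc) set" where
  "ccs_g P = {(\<alpha>, P'). step P \<alpha> P'}"

inductive tr1 :: "'c proc \<Rightarrow> 'c proc \<Rightarrow> bool"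
  and tr2 :: "'c proc \<Rightarrow> 'c proc \<Rightarrow> 'c proc \<Rightarrow> bool" where
  tau: "tr1 (Sum (add_mset (Tau, P) M)) P"
| res: "tr1 P P' \<Longrightarrow> tr1 (Res a P) (Res a P')"
| par1: "tr1 P P' \<Longrightarrow> tr1 (Par P Q) (Par P' Q)"
| int: "tr2 P Q R \<Longrightarrow> tr1 (Par P Q) R"
| hid: "tr2 P Q R \<Longrightarrow> a \<notin> fn Q \<Longrightarrow> tr2 (Res a P) Q (Res a R)"
| par2: "tr2 P Q R \<Longrightarrow> tr2 (Par P S) Q (Par S R)"
| syn: "tr2 (Sum (add_mset (Out a, P) S)) (Sum (add_mset (In a, Q) T)) (Par P Q)"
| sym: "tr2 P Q R \<Longrightarrow> tr2 Q P R"
| str1: "tr1 P R \<Longrightarrow> P \<equiv>\<^sub>s Q \<Longrightarrow> R \<equiv>\<^sub>s S \<Longrightarrow> tr1 Q S"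
| str2: "tr2 P Q R \<Longrightarrow> P \<equiv>\<^sub>s S \<Longrightarrow> Q \<equiv>\<^sub>s T \<Longrightarrow> R \<equiv>\<^sub>s U \<Longrightarrow> tr2 S T U"

fun ccs_f :: "('c::countable) proc + 'c proc \<times> 'c proc \<Rightarrow> 'c proc set" where
  "ccs_f (Inl P) = {R. tr1 P R}"
| "ccs_f (Inr (P, Q)) = {R. tr2 P Q R}"

definition Fmap :: "('a \<Rightarrow> 'b) \<Rightarrow> 'a + 'a \<times> 'a \<Rightarrow> 'b + 'b \<times> 'b" where
  "Fmap h = map_sum h (map_prod h h)"

definition Fset :: "'a set \<Rightarrow> ('a + 'a \<times> 'a) set" where
  "Fset Y = Inl ` Y \<union> Inr ` (Y \<times> Y)"

definition Bmap :: "('a \<Rightarrow> 'b) \<Rightarrow> 'a set \<Rightarrow> 'b set" where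
  "Bmap h S = h ` S"

definition Tmap :: "('a \<Rightarrow> 'b) \<Rightarrow> ('l \<times> 'a) set \<Rightarrow> ('l \<times> 'b) set" where
  "Tmap h S = (\<lambda>(l, x). (l, h x)) ` S"

definition coalg :: "'y set \<Rightarrow> ('y \<Rightarrow> ('l \<times> 'y) set) \<Rightarrow> bool" where
  "coalg Y g \<longleftrightarrow> (\<forall>y\<in>Y. g y \<subseteq> UNIV \<times> Y)"

definition coalg_hom :: "'x set \<Rightarrow> ('x \<Rightarrow> ('l \<times> 'x) set) \<Rightarrow> 'y set \<Rightarrow> ('y \<Rightarrow> ('l \<times> 'y) set) \<Rightarrow> ('x \<Rightarrow> 'y) \<Rightarrow> bool" where
  "coalg_hom X g Y g' h \<longleftrightarrow> (\<forall>x\<in>X. h x \<in> Y \<and> g' (h x) = Tmap h (g x))"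

text \<open>Epimorphisms of coalgebras over Set, rendered as surjective homomorphisms.\<close>
definition coalg_epi :: "'x set \<Rightarrow> ('x \<Rightarrow> ('l \<times> 'x) set) \<Rightarrow> 'y set \<Rightarrow> ('y \<Rightarrow> ('l \<times> 'y) set) \<Rightarrow> ('x \<Rightarrow> 'y) \<Rightarrow> bool" where
  "coalg_epi X g Y g' h \<longleftrightarrow> coalg_hom X g Y g' h \<and> h ` X = Y"

definition dialg :: "'y set \<Rightarrow> ('y + 'y \<times> 'y \<Rightarrow> 'y set) \<Rightarrow> bool" where
  "dialg Y f \<longleftrightarrow> (\<forall>u\<in>Fset Y. f u \<subseteq> Y)"

definition dialg_hom :: "'x set \<Rightarrow> ('x + 'x \<times> 'x \<Rightarrow> 'x set) \<Rightarrow> 'y set \<Rightarrow> ('y + 'y \<times> 'y \<Rightarrow> 'y set) \<Rightarrow> ('x \<Rightarrow> 'y) \<Rightarrow> bool" where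
  "dialg_hom X f Y f' h \<longleftrightarrow> (\<forall>x\<in>X. h x \<in> Y) \<and> (\<forall>u\<in>Fset X. f' (Fmap h u) = Bmap h (f u))"

definition dialg_epi :: "'x set \<Rightarrow> ('x + 'x \<times> 'x \<Rightarrow> 'x set) \<Rightarrow> 'y set \<Rightarrow> ('y + 'y \<times> 'y \<Rightarrow> 'y set) \<Rightarrow> ('x \<Rightarrow> 'y) \<Rightarrow> bool" where
  "dialg_epi X f Y f' h \<longleftrightarrow> dialg_hom X f Y f' h \<and> h ` X = Y"

definition Rg_obj :: "'y set \<Rightarrow> ('y \<Rightarrow> ('c pre \<times> 'y) set) \<Rightarrow> (('c::countable) proc \<Rightarrow> 'y) \<Rightarrow> bool" where
  "Rg_obj Y g' h \<longleftrightarrow> coalg Y g' \<and> coalg_epi UNIV ccs_g Y g' h \<and>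
     (\<forall>x x' y y'. h x = h x' \<and> h y = h y' \<longrightarrow> h (Par x y) = h (Par x' y'))"

definition Rf_obj :: "'y set \<Rightarrow> ('y + 'y \<times> 'y \<Rightarrow> 'y set) \<Rightarrow> (('c::countable) proc \<Rightarrow> 'y) \<Rightarrow> bool" where
  "Rf_obj Y f' h \<longleftrightarrow> dialg Y f' \<and> dialg_epi UNIV ccs_f Y f' h"

text \<open>Invariants: Phi h and Psi h are the actions of the functors on the arrow hat-h (= h).\<close>
definition invariant :: "(('x \<Rightarrow> 'y) \<Rightarrow> bool) \<Rightarrow> (('x \<Rightarrow> 'y) \<Rightarrow> 'a \<Rightarrow> 'b) \<Rightarrow> (('x \<Rightarrow> 'y) \<Rightarrow> 'c \<Rightarrow> 'd) \<Rightarrow> ('a \<Rightarrow> 'c) \<Rightarrow> bool" where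
  "invariant Obj Phi Psi k \<longleftrightarrow>
     (\<forall>h x1 x2. Obj h \<longrightarrow> Phi h x1 = Phi h x2 \<longrightarrow> Psi h (k x1) = Psi h (k x2))"

fun ccs_delta :: "('c pre \<times> ('c::countable) proc) set + ('c pre \<times> 'c proc) set \<times> ('c pre \<times> 'c proc) set \<Rightarrow> 'c proc set" where
  "ccs_delta (Inl p) = {x. (Tau, x) \<in> p}"
| "ccs_delta (Inr (p1, p2)) = {Par x y | x y. \<exists>a. ((In a, x) \<in> p1 \<and> (Out a, y) \<in> p2) \<or> ((Out a, x) \<in> p1 \<and> (In a, y) \<in> p2)}"

definition ccs_lambda :: "('c::countable) proc \<Rightarrow> ('c pre \<times> ('c proc + 'c proc \<times> 'c proc)) set" where
  "ccs_lambda x = {(Tau, Inl x)} \<union> {(In a, Inr (x, pfx (Out a) nil)) | a. True}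
                  \<union> {(Out a, Inr (x, pfx (In a) nil)) | a. True}"

definition ccs_mu :: "('l \<times> 'a set) set \<Rightarrow> ('l \<times> 'a) set" where
  "ccs_mu q = {(l, x). \<exists>q'. (l, q') \<in> q \<and> x \<in> q'}"

end

theory Submission
  imports Defs
begin


fun co :: "'c pre \<Rightarrow> 'c pre" where
  "co Tau = Tau" | "co (In c) = Out c" | "co (Out c) = In c"

lemma co_co[simp]: "co (co a) = a" by (cases a) auto
lemma fn_co[simp]: "fn_pre (co a) = fn_pre a" by (cases a) auto
lemma co_Tau_iff[simp]: "(co a = Tau) = (a = Tau)" by (cases a) auto

inductive st :: "'c proc \<Rightarrow> 'c pre \<Rightarrow> 'c proc \<Rightarrow> bool" where
  pre: "st (Sum (add_mset (\<alpha>, P) M)) \<alpha> P"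
| res: "a \<notin> fn_pre \<alpha> \<Longrightarrow> st P \<alpha> P' \<Longrightarrow> st (Res a P) \<alpha> (Res a P')"
| parl: "st P \<alpha> P' \<Longrightarrow> st (Par P Q) \<alpha> (Par P' Q)"
| parr: "st Q \<alpha> Q' \<Longrightarrow> st (Par P Q) \<alpha> (Par P Q')"
| syn: "st P \<alpha> P' \<Longrightarrow> st Q (co \<alpha>) Q' \<Longrightarrow> \<alpha> \<noteq> Tau \<Longrightarrow> st (Par P Q) Tau (Par P' Q')"

inductive_cases st_SumE: "st (Sum M) \<alpha> X"
inductive_cases st_ParE: "st (Par P Q) \<alpha> X"
inductive_cases st_ResE: "st (Res a P) \<alpha> X"

lemma st_nil[simp]: "\<not> st nil \<alpha> X"
  unfolding nil_def by (auto elim: st_SumE)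

lemma fn_st: "st P \<alpha> P' \<Longrightarrow> fn P' \<subseteq> fn P \<and> fn_pre \<alpha> \<subseteq> fn P"
  by (induction rule: st.induct) auto

lemma swap_name_inv[simp]: "swap_name a b (swap_name a b c) = c"
  by (auto simp: swap_name_def)

lemma swap_name_inj[simp]: "(swap_name a b c = swap_name a b d) = (c = d)"
  by (auto simp: swap_name_def)

lemma swap_pre_inv[simp]: "swap_pre a b (swap_pre a b x) = x"
  by (cases x) auto

lemma fn_swap_pre: "fn_pre (swap_pre a b x) = swap_name a b ` fn_pre x"
  by (cases x) auto

lemma swap_pre_co: "swap_pre a b (co x) = co (swap_pre a b x)"
  by (cases x) auto

lemma swap_pre_Tau_iff[simp]: "(swap_pre a b x = Tau) = (x = Tau)"
  by (cases x) auto

lemma swap_pre_id: "a \<notin> fn_pre x \<Longrightarrow> b \<notin> fn_pre x \<Longrightarrow> swap_pre a b x = x"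
  by (cases x) (auto simp: swap_name_def)

lemma fn_pswap: "fn (pswap a b P) = swap_name a b ` fn P"
proof (induction P)
  case (Sum M)
  then show ?case
    by (auto simp: fn_swap_pre image_iff) (force+)?
next
  case (Par P Q) then show ?case by auto
next
  case (Res c P) then show ?case by auto
qed

lemma pswap_inv[simp]: "pswap a b (pswap a b P) = P"
proof (induction P)
  case (Sum M)
  then show ?case
    by (simp add: multiset.map_comp) (rule multiset.map_ident_strong, auto)
qed auto

lemma st_pswap: "st P \<alpha> P' \<Longrightarrow> st (pswap a b P) (swap_pre a b \<alpha>) (pswap a b P')"
proof (induction rule: st.induct)
  case (pre \<alpha> P M) then show ?case by (simp add: st.pre)
next
  case (res c \<alpha> P P') then show ?case by (auto intro!: st.res simp: fn_swap_pre)
next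
  case (syn P \<alpha> P' Q Q') then show ?case by (auto intro!: st.syn simp: swap_pre_co)
qed (auto intro: st.intros)


abbreviation sc (infix "\<cong>" 50) where "sc \<equiv> scong"

lemma harmony:
  "P \<equiv>\<^sub>s Q \<Longrightarrow> (\<forall>\<alpha> P'. st P \<alpha> P' \<longrightarrow> (\<exists>Q'. st Q \<alpha> Q' \<and> P' \<equiv>\<^sub>s Q')) \<and>
                  (\<forall>\<alpha> Q'. st Q \<alpha> Q' \<longrightarrow> (\<exists>P'. st P \<alpha> P' \<and> P' \<equiv>\<^sub>s Q'))"
proof (induction rule: scong.induct)
  case (refl P) then show ?case by (blast intro: scong.refl)
next
  case (sym P Q) then show ?case by (blast intro: scong.sym)
next
  case (trans P Q R) then show ?case by (meson scong.trans)
next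
  case (sum_cong P P' \<alpha> M)
  have A: "\<exists>Q'. st (Sum (add_mset (\<alpha>, P') M)) \<beta> Q' \<and> X \<equiv>\<^sub>s Q'"
    if "st (Sum (add_mset (\<alpha>, P) M)) \<beta> X" "P \<equiv>\<^sub>s P'" for P P' \<beta> X
  proof -
    from that(1) obtain N where N: "add_mset (\<alpha>, P) M = add_mset (\<beta>, X) N" by (auto elim: st_SumE)
    show ?thesis
    proof (cases "(\<alpha>, P) = (\<beta>, X)")
      case True then show ?thesis using that(2) by (auto intro: st.pre)
    next
      case False
      then have "(\<beta>, X) \<in># M" using N by (metis insert_noteq_member)
      then obtain M' where "M = add_mset (\<beta>, X) M'" by (metis mset_add)
      then have "add_mset (\<alpha>, P') M = add_mset (\<beta>, X) (add_mset (\<alpha>, P') M')" by simp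
      then show ?thesis by (metis st.pre scong.refl)
    qed
  qed
  show ?case using A sum_cong.hyps by (meson scong.sym)
next
  case (par_cong P P' Q Q')
  note I1 = par_cong.IH(1)[THEN conjunct1, rule_format]
  note I2 = par_cong.IH(1)[THEN conjunct2, rule_format]
  note I3 = par_cong.IH(2)[THEN conjunct1, rule_format]
  note I4 = par_cong.IH(2)[THEN conjunct2, rule_format]
  show ?case
  proof (intro conjI allI impI)
    fix \<alpha> X assume "st (Par P Q) \<alpha> X"
    then show "\<exists>Q'a. st (Par P' Q') \<alpha> Q'a \<and> X \<equiv>\<^sub>s Q'a"
    proof (rule st_ParE)
      fix P1 assume "X = Par P1 Q" "st P \<alpha> P1" then show ?thesis using I1[of \<alpha> P1] par_cong.hyps by (blast intro: st.intros scong.intros)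
    next
      fix Q1 assume "X = Par P Q1" "st Q \<alpha> Q1" then show ?thesis using I3[of \<alpha> Q1] par_cong.hyps by (blast intro: st.intros scong.intros)
    next
      fix \<beta> P1 Q1 assume "\<alpha> = Tau" "X = Par P1 Q1" "st P \<beta> P1" "st Q (co \<beta>) Q1" "\<beta> \<noteq> Tau" then show ?thesis using I1[of \<beta> P1] I3[of "co \<beta>" Q1] by (blast intro: st.intros scong.intros)
    qed
  next
    fix \<alpha> X assume "st (Par P' Q') \<alpha> X"
    then show "\<exists>P'a. st (Par P Q) \<alpha> P'a \<and> P'a \<equiv>\<^sub>s X"
    proof (rule st_ParE)
      fix P1 assume "X = Par P1 Q'" "st P' \<alpha> P1" then show ?thesis using I2[of \<alpha> P1] par_cong.hyps by (blast intro: st.intros scong.intros)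
    next
      fix Q1 assume "X = Par P' Q1" "st Q' \<alpha> Q1" then show ?thesis using I4[of \<alpha> Q1] par_cong.hyps by (blast intro: st.intros scong.intros)
    next
      fix \<beta> P1 Q1 assume "\<alpha> = Tau" "X = Par P1 Q1" "st P' \<beta> P1" "st Q' (co \<beta>) Q1" "\<beta> \<noteq> Tau" then show ?thesis using I2[of \<beta> P1] I4[of "co \<beta>" Q1] by (blast intro: st.intros scong.intros)
    qed
  qed
next
  case (res_cong P P' a)
  then show ?case by (blast elim: st_ResE intro: st.intros scong.intros)
next
  case (alpha b a P)
  have bP: "b \<notin> fn P - {a}" using alpha by simp
  show ?case
  proof (intro conjI allI impI)
    fix \<alpha> X assume "st (Res a P) \<alpha> X"
    then obtain P' where X: "X = Res a P'" "a \<notin> fn_pre \<alpha>" "st P \<alpha> P'" by (elim st_ResE)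
    have f: "fn P' \<subseteq> fn P" "fn_pre \<alpha> \<subseteq> fn P" using fn_st[OF X(3)] by auto
    have bn: "b \<notin> fn_pre \<alpha>" using f bP X(2) by auto
    have "st (pswap a b P) \<alpha> (pswap a b P')"
      using st_pswap[OF X(3), of a b] swap_pre_id[OF X(2) bn] by simp
    then have "st (Res b (pswap a b P)) \<alpha> (Res b (pswap a b P'))" by (rule st.res[OF bn])
    moreover have "X \<equiv>\<^sub>s Res b (pswap a b P')" using X f bP by (auto intro!: scong.alpha)
    ultimately show "\<exists>Q'. st (Res b (pswap a b P)) \<alpha> Q' \<and> X \<equiv>\<^sub>s Q'" by blast
  next
    fix \<alpha> X assume "st (Res b (pswap a b P)) \<alpha> X"
    then obtain Q' where X: "X = Res b Q'" "b \<notin> fn_pre \<alpha>" "st (pswap a b P) \<alpha> Q'" by (elim st_ResE)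
    have f: "fn Q' \<subseteq> swap_name a b ` fn P" "fn_pre \<alpha> \<subseteq> swap_name a b ` fn P"
      using fn_st[OF X(3)] by (auto simp: fn_pswap)
    have an: "a \<notin> fn_pre \<alpha>"
    proof
      assume "a \<in> fn_pre \<alpha>"
      then obtain z where "z \<in> fn P" "a = swap_name a b z" using f by auto
      then show False using bP X(2) \<open>a \<in> fn_pre \<alpha>\<close> by (auto simp: swap_name_def split: if_splits)
    qed
    have "st P \<alpha> (pswap a b Q')"
      using st_pswap[OF X(3), of a b] swap_pre_id[OF an X(2)] by simp
    then have "st (Res a P) \<alpha> (Res a (pswap a b Q'))" by (rule st.res[OF an])
    moreover have "Res a (pswap a b Q') \<equiv>\<^sub>s X"
    proof -
      have "b \<notin> fn (Res a (pswap a b Q'))"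
      proof
        assume "b \<in> fn (Res a (pswap a b Q'))"
        then obtain z where z: "z \<in> fn Q'" "b = swap_name a b z" "b \<noteq> a" by (auto simp: fn_pswap)
        then have "z = a" by (auto simp: swap_name_def split: if_splits)
        then obtain w where "w \<in> fn P" "a = swap_name a b w" using f z by auto
        then show False using bP z by (auto simp: swap_name_def split: if_splits)
      qed
      from scong.alpha[OF this] show ?thesis using X by simp
    qed
    ultimately show "\<exists>P'. st (Res a P) \<alpha> P' \<and> P' \<equiv>\<^sub>s X" by blast
  qed
next
  case (par_unit P)
  show ?case
    by (auto elim!: st_ParE intro: st.intros scong.intros)
next
  case (par_comm P Q)
  show ?case
    by (auto elim!: st_ParE intro: st.intros scong.intros) (metis co_co st.syn scong.par_comm co_Tau_iff)+
next
  case (par_assoc P Q R)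
  show ?case
    by (auto elim!: st_ParE intro: st.intros scong.intros)
next
  case (scope a Q P)
  show ?case
  proof (intro conjI allI impI)
    fix \<alpha> X assume "st (Res a (Par P Q)) \<alpha> X"
    then obtain Y where Y: "X = Res a Y" "a \<notin> fn_pre \<alpha>" "st (Par P Q) \<alpha> Y" by (elim st_ResE)
    from Y(3) show "\<exists>Q'. st (Par (Res a P) Q) \<alpha> Q' \<and> X \<equiv>\<^sub>s Q'"
    proof (rule st_ParE)
      fix P1 assume "Y = Par P1 Q" "st P \<alpha> P1" then show ?thesis
        using Y scope by (blast intro: st.intros scong.intros)
    next
      fix Q1 assume A: "Y = Par P Q1" "st Q \<alpha> Q1"
      then have "a \<notin> fn Q1" using fn_st[OF A(2)] scope by auto
      then show ?thesis using A Y by (blast intro: st.intros scong.intros)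
    next
      fix \<beta> P1 Q1 assume A: "\<alpha> = Tau" "Y = Par P1 Q1" "st P \<beta> P1" "st Q (co \<beta>) Q1" "\<beta> \<noteq> Tau"
      have "a \<notin> fn Q1" "a \<notin> fn_pre \<beta>" using fn_st[OF A(4)] scope by auto
      then show ?thesis using A Y by (blast intro: st.intros scong.intros)
    qed
  next
    fix \<alpha> X assume "st (Par (Res a P) Q) \<alpha> X"
    then show "\<exists>P'. st (Res a (Par P Q)) \<alpha> P' \<and> P' \<equiv>\<^sub>s X"
    proof (rule st_ParE)
      fix P1 assume A: "X = Par P1 Q" "st (Res a P) \<alpha> P1"
      from A(2) obtain P2 where "P1 = Res a P2" "a \<notin> fn_pre \<alpha>" "st P \<alpha> P2" by (elim st_ResE)
      then show ?thesis using A scope by (blast intro: st.intros scong.intros)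
    next
      fix Q1 assume A: "X = Par (Res a P) Q1" "st Q \<alpha> Q1"
      then have "a \<notin> fn Q1" "a \<notin> fn_pre \<alpha>" using fn_st[OF A(2)] scope by auto
      then show ?thesis using A by (blast intro: st.intros scong.intros)
    next
      fix \<beta> P1 Q1 assume A: "\<alpha> = Tau" "X = Par P1 Q1" "st (Res a P) \<beta> P1" "st Q (co \<beta>) Q1" "\<beta> \<noteq> Tau"
      from A(3) obtain P2 where B: "P1 = Res a P2" "a \<notin> fn_pre \<beta>" "st P \<beta> P2" by (elim st_ResE)
      have "a \<notin> fn Q1" using fn_st[OF A(4)] scope by auto
      have "st (Res a (Par P Q)) Tau (Res a (Par P2 Q1))"
        using B A by (auto intro!: st.res st.syn)
      moreover have "Res a (Par P2 Q1) \<equiv>\<^sub>s X" using A B \<open>a \<notin> fn Q1\<close> by (auto intro: scong.scope)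
      ultimately show ?thesis using A by blast
    qed
  qed
next
  case (res_nil a)
  show ?case by (auto elim!: st_ResE)
next
  case (res_comm a b P)
  show ?case by (auto elim!: st_ResE intro!: st.intros scong.intros)
qed


lemma st_step: "st P \<alpha> P' \<Longrightarrow> step P \<alpha> P'"
proof (induction rule: st.induct)
  case (parr Q \<alpha> Q' P)
  have "step (Par Q P) \<alpha> (Par Q' P)" by (rule step.par[OF parr.IH])
  then show ?case by (rule step.str[OF scong.par_comm scong.par_comm])
next
  case (syn P \<alpha> P' Q Q')
  show ?case
  proof (cases \<alpha>)
    case Tau then show ?thesis using syn by simp
  next
    case (In c)
    then have "step (Par Q P) Tau (Par Q' P')" using syn by (auto intro: step.syn)
    then show ?thesis by (rule step.str[OF scong.par_comm scong.par_comm])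
  next
    case (Out c)
    then show ?thesis using syn by (auto intro: step.syn)
  qed
qed (auto intro: step.intros)

lemma step_st: "step P \<alpha> P' \<Longrightarrow> \<exists>Q. st P \<alpha> Q \<and> Q \<equiv>\<^sub>s P'"
proof (induction rule: step.induct)
  case (pre \<alpha> P M) then show ?case by (blast intro: st.pre scong.refl)
next
  case (res a \<alpha> P P') then show ?case by (blast intro: st.res scong.res_cong)
next
  case (par P \<alpha> P' Q) then show ?case by (blast intro: st.parl scong.par_cong scong.refl)
next
  case (syn P c P' Q Q')
  then obtain P0 Q0 where "st P (Out c) P0" "P0 \<equiv>\<^sub>s P'" "st Q (In c) Q0" "Q0 \<equiv>\<^sub>s Q'" by blast
  then show ?case by (intro exI[of _ "Par P0 Q0"]) (auto intro: st.syn scong.par_cong)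
next
  case (str P Q P' Q' \<alpha>)
  then obtain R where R: "st P \<alpha> R" "R \<equiv>\<^sub>s P'" by blast
  from harmony[OF str(1)] R(1) obtain S where "st Q \<alpha> S" "R \<equiv>\<^sub>s S" by blast
  then show ?case using R(2) str(2) by (meson scong.sym scong.trans)
qed

lemma step_iff: "step P \<alpha> P' \<longleftrightarrow> (\<exists>Q. st P \<alpha> Q \<and> Q \<equiv>\<^sub>s P')"
proof
  assume "step P \<alpha> P'" then show "\<exists>Q. st P \<alpha> Q \<and> Q \<equiv>\<^sub>s P'" by (rule step_st)
next
  assume "\<exists>Q. st P \<alpha> Q \<and> Q \<equiv>\<^sub>s P'"
  then obtain Q where "st P \<alpha> Q" "Q \<equiv>\<^sub>s P'" by blast
  then show "step P \<alpha> P'" using step.str[OF scong.refl \<open>Q \<equiv>\<^sub>s P'\<close> st_step] by blast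
qed

lemma step_parr: "step Q \<alpha> Q1 \<Longrightarrow> step (Par P Q) \<alpha> (Par P Q1)"
  unfolding step_iff by (blast intro: st.parr scong.par_cong scong.refl)

lemma step_parl: "step P \<alpha> P1 \<Longrightarrow> step (Par P Q) \<alpha> (Par P1 Q)"
  by (rule step.par)

lemma step_syn: "step P \<beta> P1 \<Longrightarrow> step Q (co \<beta>) Q1 \<Longrightarrow> \<beta> \<noteq> Tau \<Longrightarrow> step (Par P Q) Tau (Par P1 Q1)"
  unfolding step_iff by (blast intro: st.syn scong.par_cong)

definition bisim_rel :: "('c proc \<Rightarrow> 'c proc \<Rightarrow> bool) \<Rightarrow> bool" where
  "bisim_rel R \<longleftrightarrow> (\<forall>P Q. R P Q \<longrightarrow>
     (\<forall>\<alpha> P'. step P \<alpha> P' \<longrightarrow> (\<exists>Q'. step Q \<alpha> Q' \<and> R P' Q')) \<and>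
     (\<forall>\<alpha> Q'. step Q \<alpha> Q' \<longrightarrow> (\<exists>P'. step P \<alpha> P' \<and> R P' Q')))"

definition bis :: "'c proc \<Rightarrow> 'c proc \<Rightarrow> bool" where
  "bis P Q \<longleftrightarrow> (\<exists>R. bisim_rel R \<and> R P Q)"

lemma bis_rel: "bisim_rel bis"
  unfolding bisim_rel_def
proof (intro allI impI, intro conjI)
  fix P Q assume "bis P Q"
  then obtain R where R: "bisim_rel R" "R P Q" unfolding bis_def by blast
  have sub: "R x y \<Longrightarrow> bis x y" for x y using R(1) unfolding bis_def by blast
  have R1: "\<forall>\<alpha> P'. step P \<alpha> P' \<longrightarrow> (\<exists>Q'. step Q \<alpha> Q' \<and> R P' Q')"
   and R2: "\<forall>\<alpha> Q'. step Q \<alpha> Q' \<longrightarrow> (\<exists>P'. step P \<alpha> P' \<and> R P' Q')"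
    using R unfolding bisim_rel_def by blast+
  show "\<forall>\<alpha> P'. step P \<alpha> P' \<longrightarrow> (\<exists>Q'. step Q \<alpha> Q' \<and> bis P' Q')" using R1 sub by blast
  show "\<forall>\<alpha> Q'. step Q \<alpha> Q' \<longrightarrow> (\<exists>P'. step P \<alpha> P' \<and> bis P' Q')" using R2 sub by blast
qed

lemma bisD1: "bis P Q \<Longrightarrow> step P \<alpha> P' \<Longrightarrow> \<exists>Q'. step Q \<alpha> Q' \<and> bis P' Q'"
  using bis_rel unfolding bisim_rel_def by blast

lemma bisD2: "bis P Q \<Longrightarrow> step Q \<alpha> Q' \<Longrightarrow> \<exists>P'. step P \<alpha> P' \<and> bis P' Q'"
  using bis_rel unfolding bisim_rel_def by blast

lemma bis_refl: "bis P P"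
proof -
  have "bisim_rel (=)" unfolding bisim_rel_def by blast
  then show ?thesis unfolding bis_def by blast
qed

lemma bis_sym: "bis P Q \<Longrightarrow> bis Q P"
proof -
  assume a: "bis P Q"
  have "bisim_rel (\<lambda>x y. bis y x)" unfolding bisim_rel_def using bisD1 bisD2 by blast
  then show ?thesis using a unfolding bis_def by blast
qed

lemma bis_trans: "bis P Q \<Longrightarrow> bis Q R \<Longrightarrow> bis P R"
proof -
  assume a: "bis P Q" "bis Q R"
  have "bisim_rel (\<lambda>x z. \<exists>y. bis x y \<and> bis y z)" unfolding bisim_rel_def
  proof (intro allI impI, intro conjI)
    fix x z assume "\<exists>y. bis x y \<and> bis y z"
    then obtain y where y: "bis x y" "bis y z" by blast
    show "\<forall>\<alpha> P'. step x \<alpha> P' \<longrightarrow> (\<exists>Q'. step z \<alpha> Q' \<and> (\<exists>y. bis P' y \<and> bis y Q'))"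
    proof (intro allI impI)
      fix \<alpha> x1 assume "step x \<alpha> x1"
      then obtain y1 where "step y \<alpha> y1" "bis x1 y1" using bisD1[OF y(1)] by blast
      then obtain z1 where "step z \<alpha> z1" "bis y1 z1" using bisD1[OF y(2)] by blast
      then show "\<exists>Q'. step z \<alpha> Q' \<and> (\<exists>y. bis x1 y \<and> bis y Q')" using \<open>bis x1 y1\<close> by blast
    qed
    show "\<forall>\<alpha> Q'. step z \<alpha> Q' \<longrightarrow> (\<exists>P'. step x \<alpha> P' \<and> (\<exists>y. bis P' y \<and> bis y Q'))"
    proof (intro allI impI)
      fix \<alpha> z1 assume "step z \<alpha> z1"
      then obtain y1 where "step y \<alpha> y1" "bis y1 z1" using bisD2[OF y(2)] by blast
      then obtain x1 where "step x \<alpha> x1" "bis x1 y1" using bisD2[OF y(1)] by blast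
      then show "\<exists>P'. step x \<alpha> P' \<and> (\<exists>y. bis P' y \<and> bis y z1)" using \<open>bis y1 z1\<close> by blast
    qed
  qed
  then show ?thesis using a unfolding bis_def by blast
qed

definition PR :: "'c proc \<Rightarrow> 'c proc \<Rightarrow> bool" where
  "PR A B \<longleftrightarrow> (\<exists>P Q P' Q'. bis P P' \<and> bis Q Q' \<and> A \<equiv>\<^sub>s Par P Q \<and> B \<equiv>\<^sub>s Par P' Q')"

lemma PR_sym: "PR A B \<Longrightarrow> PR B A"
  unfolding PR_def using bis_sym by blast

lemma PR_half: "PR A B \<Longrightarrow> step A \<alpha> A' \<Longrightarrow> \<exists>B'. step B \<alpha> B' \<and> PR A' B'"
proof -
  assume "PR A B" "step A \<alpha> A'"
  then obtain P Q P' Q' where H: "bis P P'" "bis Q Q'" "A \<equiv>\<^sub>s Par P Q" "B \<equiv>\<^sub>s Par P' Q'"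
    unfolding PR_def by blast
  have BB: "step (Par P' Q') \<beta> X \<Longrightarrow> step B \<beta> X" for \<beta> X
    using step.str[OF scong.sym[OF H(4)] scong.refl] by blast
  have "step (Par P Q) \<alpha> A'" using step.str[OF H(3) scong.refl] \<open>step A \<alpha> A'\<close> by blast
  then obtain S where S: "st (Par P Q) \<alpha> S" "S \<equiv>\<^sub>s A'" using step_st by blast
  from S(1) show ?thesis
  proof (rule st_ParE)
    fix P1 assume a: "S = Par P1 Q" "st P \<alpha> P1"
    then obtain P1' where "step P' \<alpha> P1'" "bis P1 P1'" using bisD1[OF H(1) st_step] by blast
    moreover have "PR A' (Par P1' Q')" unfolding PR_def using a S H \<open>bis P1 P1'\<close>
      by (meson scong.sym scong.refl)
    ultimately show ?thesis using BB step_parl[OF \<open>step P' \<alpha> P1'\<close>] by blast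
  next
    fix Q1 assume a: "S = Par P Q1" "st Q \<alpha> Q1"
    then obtain Q1' where "step Q' \<alpha> Q1'" "bis Q1 Q1'" using bisD1[OF H(2) st_step] by blast
    moreover have "PR A' (Par P' Q1')" unfolding PR_def using a S H \<open>bis Q1 Q1'\<close>
      by (meson scong.sym scong.refl)
    ultimately show ?thesis using BB step_parr[OF \<open>step Q' \<alpha> Q1'\<close>] by blast
  next
    fix \<beta> P1 Q1 assume a: "\<alpha> = Tau" "S = Par P1 Q1" "st P \<beta> P1" "st Q (co \<beta>) Q1" "\<beta> \<noteq> Tau"
    then obtain P1' where p: "step P' \<beta> P1'" "bis P1 P1'" using bisD1[OF H(1) st_step] by blast
    obtain Q1' where q: "step Q' (co \<beta>) Q1'" "bis Q1 Q1'" using a bisD1[OF H(2) st_step] by blast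
    have "step B \<alpha> (Par P1' Q1')" using BB step_syn[OF p(1) q(1) a(5)] a(1) by simp
    moreover have "PR A' (Par P1' Q1')" unfolding PR_def using p q a S
      by (meson scong.sym scong.refl)
    ultimately show ?thesis by blast
  qed
qed

lemma bis_par: "bis P P' \<Longrightarrow> bis Q Q' \<Longrightarrow> bis (Par P Q) (Par P' Q')"
proof -
  assume a: "bis P P'" "bis Q Q'"
  have "bisim_rel PR" unfolding bisim_rel_def
  proof (intro allI impI, intro conjI)
    fix A B assume "PR A B"
    show "\<forall>\<alpha> P'. step A \<alpha> P' \<longrightarrow> (\<exists>Q'. step B \<alpha> Q' \<and> PR P' Q')"
      using PR_half[OF \<open>PR A B\<close>] by blast
    show "\<forall>\<alpha> Q'. step B \<alpha> Q' \<longrightarrow> (\<exists>P'. step A \<alpha> P' \<and> PR P' Q')"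
      using PR_half[OF PR_sym[OF \<open>PR A B\<close>]] PR_sym by blast
  qed
  moreover have "PR (Par P Q) (Par P' Q')" unfolding PR_def using a scong.refl by blast
  ultimately show ?thesis unfolding bis_def by blast
qed




lemma Tmap_comp: "Tmap f (Tmap g S) = Tmap (f \<circ> g) S"
  unfolding Tmap_def image_image by (rule image_cong) (auto split: prod.splits)

lemma Tmap_cong: "(\<And>x. f x = g x) \<Longrightarrow> Tmap f S = Tmap g S"
  by (metis ext)

lemma bis_Tmap:
  assumes "bis x x'" "\<And>a b. bis a b \<Longrightarrow> c a = c b"
  shows "Tmap c (ccs_g x) = Tmap c (ccs_g (x' :: ('c::countable) proc))"
proof -
  have 1: "Tmap c (ccs_g x) \<subseteq> Tmap c (ccs_g x')" if bxx: "bis x x'" for x x'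
  proof
    fix p assume "p \<in> Tmap c (ccs_g x)"
    then obtain \<alpha> x1 where p: "p = (\<alpha>, c x1)" "step x \<alpha> x1" unfolding Tmap_def ccs_g_def by auto
    then obtain x1' where "step x' \<alpha> x1'" "bis x1 x1'" using bisD1[OF bxx] by blast
    then show "p \<in> Tmap c (ccs_g x')" using p assms(2) unfolding Tmap_def ccs_g_def by force
  qed
  show ?thesis using 1[OF assms(1)] 1[OF bis_sym[OF assms(1)]] by blast
qed

lemma part1:
  fixes h :: "('c::countable) proc \<Rightarrow> 'y" and Y :: "'y set"
  assumes cY: "coalg Y g'" and ep: "coalg_epi UNIV ccs_g Y g' h"
  shows "\<exists>(Y' :: 'y set) g'' k. Rg_obj Y' g'' (k \<circ> h) \<and> coalg Y' g'' \<and> coalg_epi Y g' Y' g'' k"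
proof -
  have hY: "h ` UNIV = Y" and gh: "\<And>x. g' (h x) = Tmap h (ccs_g x)"
    using ep unfolding coalg_epi_def coalg_hom_def by auto
  have kerbis: "h x = h x' \<Longrightarrow> bis x x'" for x x'
  proof -
    assume e: "h x = h x'"
    have "bisim_rel (\<lambda>x x'. h x = h x')" unfolding bisim_rel_def
    proof (intro allI impI, intro conjI)
      fix P Q assume e: "h P = h Q"
      have T: "Tmap h (ccs_g P) = Tmap h (ccs_g Q)" using gh e by metis
      show "\<forall>\<alpha> P'. step P \<alpha> P' \<longrightarrow> (\<exists>Q'. step Q \<alpha> Q' \<and> h P' = h Q')"
      proof (intro allI impI)
        fix \<alpha> P' assume "step P \<alpha> P'"
        then have "(\<alpha>, h P') \<in> Tmap h (ccs_g P)" unfolding Tmap_def ccs_g_def by force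
        then show "\<exists>Q'. step Q \<alpha> Q' \<and> h P' = h Q'" unfolding T unfolding Tmap_def ccs_g_def by force
      qed
      show "\<forall>\<alpha> Q'. step Q \<alpha> Q' \<longrightarrow> (\<exists>P'. step P \<alpha> P' \<and> h P' = h Q')"
      proof (intro allI impI)
        fix \<alpha> Q' assume "step Q \<alpha> Q'"
        then have "(\<alpha>, h Q') \<in> Tmap h (ccs_g Q)" unfolding Tmap_def ccs_g_def by force
        then show "\<exists>P'. step P \<alpha> P' \<and> h P' = h Q'" unfolding T[symmetric] unfolding Tmap_def ccs_g_def by force
      qed
    qed
    then show ?thesis using e unfolding bis_def by blast
  qed
  define c :: "'c proc \<Rightarrow> 'c proc" where "c x = (SOME z. bis z x)" for x
  have c_bis: "bis (c x) x" for x unfolding c_def by (rule someI[of _ x]) (rule bis_refl)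
  have c_eq: "bis x y \<Longrightarrow> c x = c y" for x y
  proof -
    assume "bis x y"
    then have "(\<lambda>z. bis z x) = (\<lambda>z. bis z y)" using bis_sym bis_trans by blast
    then show ?thesis unfolding c_def by simp
  qed
  define k where "k y = h (c (inv_into UNIV h y))" for y
  have kh: "k (h x) = h (c x)" for x
  proof -
    have "h (inv_into UNIV h (h x)) = h x" by (simp add: f_inv_into_f)
    then have "bis (inv_into UNIV h (h x)) x" by (rule kerbis)
    then show ?thesis unfolding k_def by (simp add: c_eq)
  qed
  have khc: "(k \<circ> h) = (h \<circ> c)" using kh by auto
  define Y' where "Y' = k ` Y"
  define g'' where "g'' y = Tmap k (g' y)" for y
  have Tc: "Tmap (h \<circ> c) (ccs_g x) = Tmap (h \<circ> c) (ccs_g x')" if "bis x x'" for x x'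
    by (rule bis_Tmap[OF that]) (simp add: c_eq)
  have gk: "g'' (k y) = Tmap k (g' y)" if "y \<in> Y" for y
  proof -
    have "y \<in> range h" using that hY by simp
    then obtain x where y: "y = h x" by blast
    have "g'' (k y) = Tmap k (Tmap h (ccs_g (c x)))" by (simp add: g''_def y kh gh)
    also have "\<dots> = Tmap (h \<circ> c) (ccs_g (c x))" by (simp add: Tmap_comp khc)
    also have "\<dots> = Tmap (h \<circ> c) (ccs_g x)" by (rule Tc[OF c_bis])
    also have "\<dots> = Tmap k (g' y)" by (simp add: y gh Tmap_comp khc)
    finally show ?thesis .
  qed
  have cY': "coalg Y' g''"
  proof -
    have "g'' y \<subseteq> UNIV \<times> Y'" if "y \<in> Y'" for y
    proof -
      have "y \<in> Y" using that hY unfolding Y'_def k_def by auto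
      then have "g' y \<subseteq> UNIV \<times> Y" using cY unfolding coalg_def by auto
      then show ?thesis unfolding g''_def Tmap_def Y'_def by auto
    qed
    then show ?thesis unfolding coalg_def by blast
  qed
  have epk: "coalg_epi Y g' Y' g'' k"
    unfolding coalg_epi_def coalg_hom_def Y'_def using gk by auto
  have Rg: "Rg_obj Y' g'' (k \<circ> h)"
    unfolding Rg_obj_def
  proof (intro conjI allI impI)
    show "coalg Y' g''" by (rule cY')
    show "coalg_epi UNIV ccs_g Y' g'' (k \<circ> h)"
      unfolding coalg_epi_def coalg_hom_def
    proof (intro conjI ballI)
      fix x :: "'c proc"
      show "(k \<circ> h) x \<in> Y'" unfolding Y'_def using hY by auto
      have "g'' ((k \<circ> h) x) = Tmap k (g' (h x))" using gk hY by auto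
      also have "\<dots> = Tmap (k \<circ> h) (ccs_g x)" by (simp add: gh Tmap_comp)
      finally show "g'' ((k \<circ> h) x) = Tmap (k \<circ> h) (ccs_g x)" .
    next
      show "(k \<circ> h) ` UNIV = Y'" unfolding Y'_def hY[symmetric] by (simp add: image_comp)
    qed
  next
    fix x x' y y' assume "(k \<circ> h) x = (k \<circ> h) x' \<and> (k \<circ> h) y = (k \<circ> h) y'"
    then have "h (c x) = h (c x')" "h (c y) = h (c y')" using kh by auto
    then have "bis (c x) (c x')" "bis (c y) (c y')" using kerbis by auto
    then have "bis x x'" "bis y y'"
      using bis_trans[OF bis_trans[OF bis_sym[OF c_bis] \<open>bis (c x) (c x')\<close>] c_bis]
            bis_trans[OF bis_trans[OF bis_sym[OF c_bis] \<open>bis (c y) (c y')\<close>] c_bis] by auto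
    then have "c (Par x y) = c (Par x' y')" by (intro c_eq bis_par)
    then show "(k \<circ> h) (Par x y) = (k \<circ> h) (Par x' y')" using kh by simp
  qed
  show ?thesis using Rg cY' epk by blast
qed

lemma Tmap_mem: "(l, x) \<in> S \<Longrightarrow> (l, f x) \<in> Tmap f S"
  unfolding Tmap_def by (rule image_eqI[of _ _ "(l, x)"]) auto

lemma Tmap_memE: "(l, y) \<in> Tmap f S \<Longrightarrow> \<exists>x. (l, x) \<in> S \<and> y = f x"
  unfolding Tmap_def by auto

lemma tr_lem: "(l, x) \<in> p \<Longrightarrow> Tmap h p = Tmap h q \<Longrightarrow> \<exists>x'. (l, x') \<in> q \<and> h x' = h x"
  by (metis Tmap_mem Tmap_memE)

theorem proposition5:
  shows
  \<comment> \<open>(1) R_(X,g) satisfies conditions (1) and (2)\<close>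
  "((\<forall>(Y :: 'y set) g' h. coalg Y g' \<and> coalg_epi UNIV (ccs_g :: ('c::countable) proc \<Rightarrow> _) Y g' h \<longrightarrow>
       (\<exists>(Y' :: 'y set) g'' k. Rg_obj Y' g'' (k \<circ> h) \<and> coalg Y' g'' \<and> coalg_epi Y g' Y' g'' k))
    \<and> Rg_obj (UNIV :: 'c proc set) ccs_g id)
  \<comment> \<open>(2) id is an invariant for (X,g) from F-bar to F-bar\<close>
   \<and> invariant (\<lambda>h :: 'c proc \<Rightarrow> 'y. \<exists>Y g'. Rg_obj Y g' h) (\<lambda>h. Fmap h) (\<lambda>h. Fmap h) id
  \<comment> \<open>(3) delta is an invariant for (X,g) from F o T-bar to B-bar\<close>
   \<and> invariant (\<lambda>h :: 'c proc \<Rightarrow> 'y. \<exists>Y g'. Rg_obj Y g' h) (\<lambda>h. Fmap (Tmap h)) (\<lambda>h. Bmap h) ccs_delta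
  \<comment> \<open>(4) lambda is an invariant for (X,f) from Id-bar to T o F-bar\<close>
   \<and> invariant (\<lambda>h :: 'c proc \<Rightarrow> 'y. \<exists>Y f'. Rf_obj Y f' h) (\<lambda>h. h) (\<lambda>h. Tmap (Fmap h)) ccs_lambda
  \<comment> \<open>(5) mu is an invariant for (X,f) from T o B-bar to T-bar\<close>
   \<and> invariant (\<lambda>h :: 'c proc \<Rightarrow> 'y. \<exists>Y f'. Rf_obj Y f' h) (\<lambda>h. Tmap (Bmap h)) (\<lambda>h. Tmap h) ccs_mu"
proof (intro conjI)
  show "\<forall>(Y :: 'y set) g' h. coalg Y g' \<and> coalg_epi UNIV (ccs_g :: ('c::countable) proc \<Rightarrow> _) Y g' h \<longrightarrow>
       (\<exists>(Y' :: 'y set) g'' k. Rg_obj Y' g'' (k \<circ> h) \<and> coalg Y' g'' \<and> coalg_epi Y g' Y' g'' k)"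
    using part1 by blast
  show "Rg_obj (UNIV :: 'c proc set) ccs_g id"
    unfolding Rg_obj_def coalg_def coalg_epi_def coalg_hom_def Tmap_def by auto
  show "invariant (\<lambda>h :: 'c proc \<Rightarrow> 'y. \<exists>Y g'. Rg_obj Y g' h) (\<lambda>h. Fmap h) (\<lambda>h. Fmap h) id"
    unfolding invariant_def by simp
  show "invariant (\<lambda>h :: 'c proc \<Rightarrow> 'y. \<exists>Y g'. Rg_obj Y g' h) (\<lambda>h. Fmap (Tmap h)) (\<lambda>h. Bmap h) ccs_delta"
    unfolding invariant_def
  proof (intro allI impI)
    fix h :: "'c proc \<Rightarrow> 'y" and x1 x2 :: "('c pre \<times> 'c proc) set + ('c pre \<times> 'c proc) set \<times> ('c pre \<times> 'c proc) set"
    assume "\<exists>Y g'. Rg_obj Y g' h" and e: "Fmap (Tmap h) x1 = Fmap (Tmap h) x2"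
    then have par: "\<And>x x' y y'. h x = h x' \<Longrightarrow> h y = h y' \<Longrightarrow> h (Par x y) = h (Par x' y')"
      unfolding Rg_obj_def by blast
    have inl: "Bmap h {x. (Tau, x) \<in> p} \<subseteq> Bmap h {x. (Tau, x) \<in> q}" if pq: "Tmap h p = Tmap h q" for p q
    proof
      fix z assume "z \<in> Bmap h {x. (Tau, x) \<in> p}"
      then obtain x where x: "z = h x" "(Tau, x) \<in> p" unfolding Bmap_def by auto
      then obtain x' where "(Tau, x') \<in> q" "h x' = h x" using tr_lem[OF x(2) pq] by blast
      then show "z \<in> Bmap h {x. (Tau, x) \<in> q}" using x unfolding Bmap_def by (metis (mono_tags) image_eqI mem_Collect_eq)
    qed
    have inr: "Bmap h (ccs_delta (Inr (p1, p2))) \<subseteq> Bmap h (ccs_delta (Inr (q1, q2)))"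
      if a: "Tmap h p1 = Tmap h q1" "Tmap h p2 = Tmap h q2" for p1 p2 q1 q2
    proof
      fix z assume "z \<in> Bmap h (ccs_delta (Inr (p1, p2)))"
      then obtain x y a where z: "z = h (Par x y)"
        "((In a, x) \<in> p1 \<and> (Out a, y) \<in> p2) \<or> ((Out a, x) \<in> p1 \<and> (In a, y) \<in> p2)"
        unfolding Bmap_def by auto
      from z(2) show "z \<in> Bmap h (ccs_delta (Inr (q1, q2)))"
      proof
        assume b: "(In a, x) \<in> p1 \<and> (Out a, y) \<in> p2"
        then obtain x' y' where xy: "(In a, x') \<in> q1" "h x' = h x" "(Out a, y') \<in> q2" "h y' = h y"
          using tr_lem[OF conjunct1[OF b] a(1)] tr_lem[OF conjunct2[OF b] a(2)] by blast
        have "z = h (Par x' y')" using z(1) par[OF xy(2) xy(4)] by simp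
        moreover have "Par x' y' \<in> ccs_delta (Inr (q1, q2))" using xy(1,3) by auto
        ultimately have "z = h (Par x' y')" "Par x' y' \<in> ccs_delta (Inr (q1, q2))" by auto
        then show ?thesis unfolding Bmap_def by blast
      next
        assume b: "(Out a, x) \<in> p1 \<and> (In a, y) \<in> p2"
        then obtain x' y' where xy: "(Out a, x') \<in> q1" "h x' = h x" "(In a, y') \<in> q2" "h y' = h y"
          using tr_lem[OF conjunct1[OF b] a(1)] tr_lem[OF conjunct2[OF b] a(2)] by blast
        have "z = h (Par x' y')" using z(1) par[OF xy(2) xy(4)] by simp
        moreover have "Par x' y' \<in> ccs_delta (Inr (q1, q2))" using xy(1,3) by auto
        ultimately have "z = h (Par x' y')" "Par x' y' \<in> ccs_delta (Inr (q1, q2))" by auto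
        then show ?thesis unfolding Bmap_def by blast
      qed
    qed
    show "Bmap h (ccs_delta x1) = Bmap h (ccs_delta x2)"
    proof (cases x1; cases x2)
      fix p q assume "x1 = Inl p" "x2 = Inl q"
      then have "Tmap h p = Tmap h q" using e by (simp add: Fmap_def)
      then show ?thesis using inl[of p q] inl[of q p] \<open>x1 = Inl p\<close> \<open>x2 = Inl q\<close> by (simp add: subset_antisym)
    next
      fix p u assume "x1 = Inl p" "x2 = Inr u" then show ?thesis using e by (simp add: Fmap_def)
    next
      fix u p assume "x1 = Inr u" "x2 = Inl p" then show ?thesis using e by (simp add: Fmap_def)
    next
      fix u v assume uv: "x1 = Inr u" "x2 = Inr v"
      obtain p1 p2 q1 q2 where "u = (p1, p2)" "v = (q1, q2)" by force
      then have "Tmap h p1 = Tmap h q1" "Tmap h p2 = Tmap h q2" using e uv by (auto simp: Fmap_def)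
      then show ?thesis using inr[of p1 q1 p2 q2] inr[of q1 p1 q2 p2] uv \<open>u = (p1, p2)\<close> \<open>v = (q1, q2)\<close> by (simp add: subset_antisym)
    qed
  qed
  show "invariant (\<lambda>h :: 'c proc \<Rightarrow> 'y. \<exists>Y f'. Rf_obj Y f' h) (\<lambda>h. h) (\<lambda>h. Tmap (Fmap h)) ccs_lambda"
    unfolding invariant_def
  proof (intro allI impI)
    fix h :: "'c proc \<Rightarrow> 'y" and x1 x2
    assume "h x1 = h x2"
    then show "Tmap (Fmap h) (ccs_lambda x1) = Tmap (Fmap h) (ccs_lambda x2)"
      unfolding Tmap_def ccs_lambda_def by (auto simp: Fmap_def image_Un image_iff)
  qed
  show "invariant (\<lambda>h :: 'c proc \<Rightarrow> 'y. \<exists>Y f'. Rf_obj Y f' h) (\<lambda>h. Tmap (Bmap h)) (\<lambda>h. Tmap h) ccs_mu"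
    unfolding invariant_def
  proof (intro allI impI)
    fix h :: "'c proc \<Rightarrow> 'y" and q1 q2
    assume e: "Tmap (Bmap h) q1 = Tmap (Bmap h) q2"
    have sub: "Tmap h (ccs_mu p) \<subseteq> Tmap h (ccs_mu q)" if pq: "Tmap (Bmap h) p = Tmap (Bmap h) q"
      for p q
    proof
      fix z assume "z \<in> Tmap h (ccs_mu p)"
      then obtain l x s where z: "z = (l, h x)" "(l, s) \<in> p" "x \<in> s" unfolding Tmap_def ccs_mu_def by auto
      then obtain s' where s': "(l, s') \<in> q" "Bmap h s' = Bmap h s" using tr_lem[OF z(2) pq] by blast
      have "h x \<in> h ` s'" using s'(2) z(3) unfolding Bmap_def by auto
      then obtain x' where "x' \<in> s'" "h x' = h x" by auto
      then have "(l, x') \<in> ccs_mu q" using s'(1) unfolding ccs_mu_def by auto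
      then show "z \<in> Tmap h (ccs_mu q)" using z(1) Tmap_mem \<open>h x' = h x\<close> by metis
    qed
    show "Tmap h (ccs_mu q1) = Tmap h (ccs_mu q2)" using sub[OF e] sub[OF e[symmetric]] by blast
  qed
qed

end
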